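(* Let $P\subset\mathbb{R}^d$ be a $d$-polytope and let $\Lambda\subset\mathbb{R}^d$ be a $d$-dimensional lattice. Then there exists a $d$-polytope $Q\subset P$ that is lattice reduced with respect to $\Lambda$, satisfies $\mathrm{wdt}_\Lambda(Q)=\mathrm{wdt}_\Lambda(P)$, and has at most as many vertices as $P$.
   Context: A lattice $\Lambda\subset\mathbb{R}^d$ is a discrete subgroup spanning $\mathbb{R}^d$; $\Lambda^\star=\{y: x\cdot y\in\mathbb{Z}\ \forall x\in\Lambda\}$. For a convex body $C$ (compact convex, non-empty interior), $\mathrm{wdt}_\Lambda(C)=\min_{y\in\Lambda^\star\setminus\{0\}}\max_{a,b\in C}y\cdot(a-b)$. $C$ is lattice reduced w.r.t. $\Lambda$ if no convex body $C'\subsetneq C$ has $\mathrm{wdt}_\Lambda(C')=\mathrm{wdt}_\Lambda(C)$. *)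

theory Defs
  imports "HOL-Analysis.Analysis"
begin

definition is_lattice :: "'a::euclidean_space set \<Rightarrow> bool" where
  "is_lattice L \<longleftrightarrow>
     0 \<in> L \<and> (\<forall>x\<in>L. \<forall>y\<in>L. x + y \<in> L) \<and> (\<forall>x\<in>L. - x \<in> L) \<and>
     (\<exists>e>0. \<forall>x\<in>L. x \<noteq> 0 \<longrightarrow> e \<le> norm x) \<and>
     span L = UNIV"

definition dual_lattice :: "'a::euclidean_space set \<Rightarrow> 'a set" where
  "dual_lattice L = {y. \<forall>x\<in>L. x \<bullet> y \<in> \<int>}"

definition dir_width :: "'a::euclidean_space \<Rightarrow> 'a set \<Rightarrow> real" where
  "dir_width y C = (SUP p\<in>C \<times> C. y \<bullet> (fst p - snd p))"

definition lattice_width :: "'a::euclidean_space set \<Rightarrow> 'a set \<Rightarrow> real" where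
  "lattice_width L C = Inf {dir_width y C | y. y \<in> dual_lattice L \<and> y \<noteq> 0}"

definition convex_body :: "'a::euclidean_space set \<Rightarrow> bool" where
  "convex_body C \<longleftrightarrow> compact C \<and> convex C \<and> interior C \<noteq> {}"

definition lattice_reduced :: "'a::euclidean_space set \<Rightarrow> 'a set \<Rightarrow> bool" where
  "lattice_reduced L C \<longleftrightarrow> convex_body C \<and>
     \<not> (\<exists>C'. convex_body C' \<and> C' \<subset> C \<and> lattice_width L C' = lattice_width L C)"

definition full_polytope :: "'a::euclidean_space set \<Rightarrow> bool" where
  "full_polytope P \<longleftrightarrow> polytope P \<and> interior P \<noteq> {}"

definition vertices :: "'a::euclidean_space set \<Rightarrow> 'a set" where
  "vertices P = {v. v extreme_point_of P}"

end

theory Submission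
  imports Defs
begin


lemma dw_upper:
  fixes C :: "'a::euclidean_space set"
  assumes "bounded C" "p \<in> C" "q \<in> C"
  shows "y \<bullet> (p - q) \<le> dir_width y C"
proof -
  obtain M where M: "\<And>x. x \<in> C \<Longrightarrow> norm x \<le> M" using assms(1) bounded_iff by blast
  have "bdd_above ((\<lambda>pq. y \<bullet> (fst pq - snd pq)) ` (C \<times> C))"
  proof (rule bdd_aboveI2)
    fix pq assume "pq \<in> C \<times> C"
    then have "norm (fst pq) \<le> M" "norm (snd pq) \<le> M" using M by auto
    then have "norm (fst pq - snd pq) \<le> 2*M" using norm_triangle_ineq4[of "fst pq" "snd pq"] by linarith
    then show "y \<bullet> (fst pq - snd pq) \<le> norm y * (2*M)"
      by (metis Cauchy_Schwarz_ineq2 abs_le_iff mult_left_mono norm_ge_zero order_trans)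
  qed
  then show ?thesis unfolding dir_width_def
    using cSUP_upper[of "(p,q)" "C \<times> C" "\<lambda>pq. y \<bullet> (fst pq - snd pq)"] assms by auto
qed

lemma dw_least:
  fixes C :: "'a::euclidean_space set"
  assumes "C \<noteq> {}" "\<And>p q. p \<in> C \<Longrightarrow> q \<in> C \<Longrightarrow> y \<bullet> (p - q) \<le> M"
  shows "dir_width y C \<le> M"
  unfolding dir_width_def using assms by (intro cSUP_least) auto

lemma dw_eq:
  fixes C :: "'a::euclidean_space set"
  assumes "p \<in> C" "q \<in> C" "\<And>a b. a \<in> C \<Longrightarrow> b \<in> C \<Longrightarrow> y \<bullet> (a - b) \<le> y \<bullet> (p - q)"
  shows "dir_width y C = y \<bullet> (p - q)"
proof (rule antisym)
  show "dir_width y C \<le> y \<bullet> (p - q)" using assms by (intro dw_least) auto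
  have "bdd_above ((\<lambda>pq. y \<bullet> (fst pq - snd pq)) ` (C \<times> C))"
    using assms(3) by (intro bdd_aboveI2[where M="y \<bullet> (p - q)"]) auto
  then show "y \<bullet> (p - q) \<le> dir_width y C" unfolding dir_width_def
    using cSUP_upper[of "(p,q)" "C \<times> C" "\<lambda>pq. y \<bullet> (fst pq - snd pq)"] assms by auto
qed

lemma dw_attain:
  fixes C :: "'a::euclidean_space set"
  assumes "compact C" "C \<noteq> {}"
  obtains p q where "p \<in> C" "q \<in> C" "\<And>x. x \<in> C \<Longrightarrow> y \<bullet> x \<le> y \<bullet> p"
    "\<And>x. x \<in> C \<Longrightarrow> y \<bullet> q \<le> y \<bullet> x" "dir_width y C = y \<bullet> (p - q)"
proof -
  have c: "continuous_on C (\<lambda>x. y \<bullet> x)" by (intro continuous_intros)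
  obtain p where p: "p \<in> C" "\<And>x. x \<in> C \<Longrightarrow> y \<bullet> x \<le> y \<bullet> p"
    using continuous_attains_sup[OF assms c] by blast
  obtain q where q: "q \<in> C" "\<And>x. x \<in> C \<Longrightarrow> y \<bullet> q \<le> y \<bullet> x"
    using continuous_attains_inf[OF assms c] by blast
  have "dir_width y C = y \<bullet> (p - q)"
    by (rule dw_eq) (use p q in \<open>auto simp: inner_diff_right intro: diff_mono\<close>)
  with p q that show ?thesis by blast
qed

lemma dw_mono:
  fixes C :: "'a::euclidean_space set"
  assumes "C \<subseteq> C'" "C \<noteq> {}" "bounded C'"
  shows "dir_width y C \<le> dir_width y C'"
  using assms by (intro dw_least) (auto intro: dw_upper)

lemma dw_nonneg:
  fixes C :: "'a::euclidean_space set"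
  assumes "C \<noteq> {}" "bounded C"
  shows "0 \<le> dir_width y C"
  using assms dw_upper[of C _ _ y] by fastforce

lemma lw_le:
  fixes C :: "'a::euclidean_space set"
  assumes "y \<in> dual_lattice L" "y \<noteq> 0" "C \<noteq> {}" "bounded C"
  shows "lattice_width L C \<le> dir_width y C"
  unfolding lattice_width_def
  by (rule cInf_lower) (use assms dw_nonneg in \<open>auto intro!: bdd_belowI[where m=0]\<close>)

lemma lw_ge:
  fixes C :: "'a::euclidean_space set"
  assumes "\<exists>y. y \<in> dual_lattice L \<and> y \<noteq> 0" "\<And>y. y \<in> dual_lattice L \<Longrightarrow> y \<noteq> 0 \<Longrightarrow> w \<le> dir_width y C"
  shows "w \<le> lattice_width L C"
  unfolding lattice_width_def
  by (rule cInf_greatest) (use assms in auto)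

lemma hull_halfspace:
  fixes X :: "'a::euclidean_space set"
  assumes "\<And>x. x \<in> X \<Longrightarrow> z \<bullet> x \<le> c" "p \<in> convex hull X"
  shows "z \<bullet> p \<le> c"
proof -
  have "convex hull X \<subseteq> {x. z \<bullet> x \<le> c}"
    by (rule hull_minimal) (use assms convex_halfspace_le in auto)
  then show ?thesis using assms by auto
qed

lemma dw_hull_attain:
  fixes X :: "'a::euclidean_space set"
  assumes "finite X" "X \<noteq> {}"
  obtains p q where "p \<in> X" "q \<in> X" "\<And>x. x \<in> convex hull X \<Longrightarrow> y \<bullet> x \<le> y \<bullet> p"
    "\<And>x. x \<in> convex hull X \<Longrightarrow> y \<bullet> q \<le> y \<bullet> x" "dir_width y (convex hull X) = y \<bullet> (p - q)"
proof -
  obtain p q where pq: "p \<in> X" "q \<in> X" "\<And>x. x \<in> X \<Longrightarrow> y \<bullet> x \<le> y \<bullet> p"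
    "\<And>x. x \<in> X \<Longrightarrow> y \<bullet> q \<le> y \<bullet> x"
    using dw_attain[OF finite_imp_compact[OF assms(1)] assms(2)] by metis
  have u: "y \<bullet> x \<le> y \<bullet> p" if "x \<in> convex hull X" for x
    using hull_halfspace[of X y "y \<bullet> p" x] pq that by auto
  have l: "y \<bullet> q \<le> y \<bullet> x" if "x \<in> convex hull X" for x
    using hull_halfspace[of X "-y" "-(y \<bullet> q)" x] pq that by auto
  have "dir_width y (convex hull X) = y \<bullet> (p - q)"
    by (rule dw_eq) (use pq u l hull_inc in \<open>auto simp: inner_diff_right intro: diff_mono\<close>)
  with pq u l that show ?thesis by blast
qed


lemma lat_facts:
  assumes "is_lattice L"
  shows "0 \<in> L" "\<And>x y. x \<in> L \<Longrightarrow> y \<in> L \<Longrightarrow> x + y \<in> L" "\<And>x. x \<in> L \<Longrightarrow> - x \<in> L"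
    "\<And>x y. x \<in> L \<Longrightarrow> y \<in> L \<Longrightarrow> x - y \<in> L"
    "\<exists>e>0. \<forall>x\<in>L. x \<noteq> 0 \<longrightarrow> e \<le> norm x" "span L = UNIV"
proof -
  note d = assms[unfolded is_lattice_def]
  show "0 \<in> L" using d by blast
  show "\<And>x y. x \<in> L \<Longrightarrow> y \<in> L \<Longrightarrow> x + y \<in> L" using d by blast
  show "\<And>x. x \<in> L \<Longrightarrow> - x \<in> L" using d by blast
  show "x - y \<in> L" if "x \<in> L" "y \<in> L" for x y
    unfolding diff_conv_add_uminus using d that by blast
  show "\<exists>e>0. \<forall>x\<in>L. x \<noteq> 0 \<longrightarrow> e \<le> norm x" using d by blast
  show "span L = UNIV" using d by blast
qed

lemma lat_nat_mult:
  assumes "is_lattice L" "x \<in> L"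
  shows "of_nat k *\<^sub>R x \<in> L"
  by (induction k) (use lat_facts[OF assms(1)] assms(2) in \<open>auto simp: algebra_simps\<close>)

lemma lat_int_mult:
  assumes "is_lattice L" "x \<in> L"
  shows "of_int k *\<^sub>R x \<in> L"
proof (cases "k \<ge> 0")
  case True
  show ?thesis using lat_nat_mult[OF assms, of "nat k"] True by (simp add: of_nat_nat)
next
  case False
  then have "of_int k *\<^sub>R x = - (of_nat (nat (-k)) *\<^sub>R x)" by simp
  then show ?thesis using lat_nat_mult[OF assms] lat_facts(3)[OF assms(1)] by simp
qed

lemma lat_sum:
  assumes "is_lattice L" "finite I" "\<And>i. i \<in> I \<Longrightarrow> f i \<in> L"
  shows "sum f I \<in> L"
  using assms(2,3) by (induction I rule: finite_induct) (use lat_facts[OF assms(1)] in auto)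

lemma discrete_finite:
  fixes G :: "'a::euclidean_space set"
  assumes "e > 0" "\<And>x y. x \<in> G \<Longrightarrow> y \<in> G \<Longrightarrow> x \<noteq> y \<Longrightarrow> e \<le> norm (x - y)"
    "S \<subseteq> G" "bounded S"
  shows "finite S"
proof (rule ccontr)
  assume inf: "infinite S"
  obtain x where "x islimpt S" using bounded_infinite_imp_islimpt[OF order_refl assms(4) inf] by blast
  then have i: "infinite (S \<inter> ball x (e/2))" unfolding islimpt_eq_infinite_ball
    by (metis assms(1) half_gt_zero)
  then obtain p where p: "p \<in> S \<inter> ball x (e/2)" by (metis ex_in_conv finite.emptyI)
  have "infinite (S \<inter> ball x (e/2) - {p})" using i by auto
  then obtain q where q: "q \<in> S \<inter> ball x (e/2) - {p}" by (metis ex_in_conv finite.emptyI)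
  have "dist p x < e/2" "dist q x < e/2" using p q by (auto simp: dist_commute)
  then have "dist p q < e" by (rule dist_triangle_half_l)
  moreover have "e \<le> norm (p - q)" using assms(2,3) p q by auto
  ultimately show False by (simp add: dist_norm)
qed

lemma lattice_sep:
  assumes "is_lattice L"
  obtains e where "e > 0" "\<And>x y. x \<in> L \<Longrightarrow> y \<in> L \<Longrightarrow> x \<noteq> y \<Longrightarrow> e \<le> norm (x - y)"
proof -
  obtain e where e: "e > 0" "\<forall>x\<in>L. x \<noteq> 0 \<longrightarrow> e \<le> norm x" using lat_facts(5)[OF assms] by blast
  show ?thesis
  proof (rule that[OF e(1)])
    fix x y assume xy: "x \<in> L" "y \<in> L" "x \<noteq> y"
    then have "x - y \<in> L" "x - y \<noteq> 0" using lat_facts(4)[OF assms] by auto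
    then show "e \<le> norm (x - y)" using e(2) by blast
  qed
qed

lemma lattice_basis:
  fixes L :: "'a::euclidean_space set"
  assumes "is_lattice L"
  obtains B where "B \<subseteq> L" "independent B" "span B = UNIV" "finite B"
proof -
  obtain B where B: "B \<subseteq> L" "independent B" "L \<subseteq> span B" "card B = dim L"
    by (rule basis_exists)
  have "span L \<subseteq> span B" by (rule span_minimal[OF B(3) subspace_span])
  then have "span B = UNIV" using lat_facts(6)[OF assms] by auto
  then show ?thesis using that[OF B(1,2)] independent_imp_finite[OF B(2)] by blast
qed

lemma rep_facts:
  fixes B :: "'a::euclidean_space set"
  assumes "independent B" "span B = UNIV" "finite B"
  shows "\<And>x. (\<Sum>b\<in>B. representation B x b *\<^sub>R b) = x"
    "\<And>b b'. b \<in> B \<Longrightarrow> b' \<in> B \<Longrightarrow> representation B b' b = (if b = b' then 1 else 0)"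
    "\<And>b. bounded_linear (\<lambda>x. representation B x b)"
  using real_vector.sum_representation_eq[OF assms(1) _ assms(3) order_refl] assms(2)
    real_vector.representation_basis[OF assms(1)] bounded_linear_representation[OF assms(1,2)]
  by auto

lemma rational_coords:
  fixes L :: "'a::euclidean_space set"
  assumes L: "is_lattice L" and B: "B \<subseteq> L" "independent B" "span B = UNIV" "finite B"
  obtains Nf :: nat where "Nf > 0" "\<And>x b. x \<in> L \<Longrightarrow> b \<in> B \<Longrightarrow> real Nf * representation B x b \<in> \<int>"
proof -
  define c where "c b x = representation B x b" for b x
  note rf = rep_facts[OF B(2-4), folded c_def]
  have lin: "c b (x + y) = c b x + c b y" "c b (a *\<^sub>R x) = a * c b x" "c b (x - y) = c b x - c b y"
     "c b (sum f I) = (\<Sum>i\<in>I. c b (f i))" for b x y a and f :: "'b \<Rightarrow> 'a" and I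
    using rf(3)[of b] by (auto simp: bounded_linear.linear linear_add linear_scale linear_diff linear_sum)
  obtain e where e: "e > 0" "\<And>x y. x \<in> L \<Longrightarrow> y \<in> L \<Longrightarrow> x \<noteq> y \<Longrightarrow> e \<le> norm (x - y)"
    using lattice_sep[OF L] by blast
  define R0 where "R0 = (\<Sum>b\<in>B. norm b)"
  define Fs where "Fs = L \<inter> cball 0 R0"
  have finFs: "finite Fs" unfolding Fs_def
    by (rule discrete_finite[OF e(1) e(2)]) auto
  define fr where "fr x = x - (\<Sum>b\<in>B. of_int \<lfloor>c b x\<rfloor> *\<^sub>R b)" for x
  have frL: "fr x \<in> L" if "x \<in> L" for x
    unfolding fr_def using B(1) that
    by (intro lat_facts(4)[OF L] lat_sum[OF L B(4)] lat_int_mult[OF L]) auto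
  have frc: "c b' (fr x) = frac (c b' x)" if "b' \<in> B" for b' x
  proof -
    have "c b' (fr x) = c b' x - (\<Sum>b\<in>B. of_int \<lfloor>c b x\<rfloor> * c b' b)"
      unfolding fr_def lin by simp
    also have "(\<Sum>b\<in>B. of_int \<lfloor>c b x\<rfloor> * c b' b) = (\<Sum>b\<in>B. if b = b' then of_int \<lfloor>c b' x\<rfloor> else 0)"
      by (rule sum.cong) (use rf(2) that in auto)
    also have "\<dots> = of_int \<lfloor>c b' x\<rfloor>" using that B(4) by (simp add: sum.delta')
    finally show ?thesis by (simp add: frac_def)
  qed
  have frF: "fr x \<in> Fs" if "x \<in> L" for x
  proof -
    have "fr x = (\<Sum>b\<in>B. c b (fr x) *\<^sub>R b)" using rf(1) by simp
    also have "\<dots> = (\<Sum>b\<in>B. frac (c b x) *\<^sub>R b)" by (rule sum.cong) (auto simp: frc)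
    finally have eq: "fr x = (\<Sum>b\<in>B. frac (c b x) *\<^sub>R b)" .
    have "norm (fr x) \<le> (\<Sum>b\<in>B. norm (frac (c b x) *\<^sub>R b))" unfolding eq by (rule norm_sum)
    also have "\<dots> \<le> R0" unfolding R0_def
    proof (rule sum_mono)
      fix b
      have "\<bar>frac (c b x)\<bar> \<le> 1" using frac_lt_1[of "c b x"] frac_ge_0[of "c b x"] by linarith
      then show "norm (frac (c b x) *\<^sub>R b) \<le> norm b"
        by (simp add: mult_left_le_one_le)
    qed
    finally show ?thesis using frL[OF that] unfolding Fs_def by auto
  qed
  define N where "N = card Fs"
  have main: "real (fact N) * c b x \<in> \<int>" if x: "x \<in> L" and b: "b \<in> B" for x b
  proof -
    define g where "g k = fr (real k *\<^sub>R x)" for k :: nat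
    have gF: "g ` {0..N} \<subseteq> Fs" unfolding g_def using frF lat_nat_mult[OF L x] by auto
    have "\<not> inj_on g {0..N}"
    proof
      assume "inj_on g {0..N}"
      then have "card {0..N} \<le> card Fs" using card_inj_on_le[OF _ gF finFs] by blast
      then show False by (simp add: N_def)
    qed
    then obtain k1 k2 where k: "k1 \<in> {0..N}" "k2 \<in> {0..N}" "k1 < k2" "g k1 = g k2"
      unfolding inj_on_def by (metis linorder_neqE_nat)
    define \<theta> where "\<theta> = c b x"
    have "frac (real k1 * \<theta>) = frac (real k2 * \<theta>)"
      using k(4) frc[OF b] unfolding g_def \<theta>_def by (metis lin(2))
    then have "real k2 * \<theta> - real k1 * \<theta> = of_int (\<lfloor>real k2 * \<theta>\<rfloor> - \<lfloor>real k1 * \<theta>\<rfloor>)"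
      by (simp add: frac_def)
    then have mi: "real (k2 - k1) * \<theta> \<in> \<int>" using k(3) by (simp add: of_nat_diff left_diff_distrib)
    have "(k2 - k1) dvd fact N" using k by (intro dvd_fact) auto
    then obtain j where j: "fact N = (k2 - k1) * j" by blast
    have "real (fact N) * \<theta> = real j * (real (k2 - k1) * \<theta>)" using j
      by (metis mult.commute mult.left_commute of_nat_mult)
    also have "\<dots> \<in> \<int>" by (rule Ints_mult[OF Ints_of_nat mi])
    finally show ?thesis unfolding \<theta>_def .
  qed
  show ?thesis by (rule that[of "fact N"]) (use main in \<open>auto simp: c_def\<close>)
qed


lemma riesz:
  fixes g :: "'a::euclidean_space \<Rightarrow> real"
  assumes "linear g"
  shows "(\<Sum>e\<in>Basis. g e *\<^sub>R e) \<bullet> x = g x"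
proof -
  have "(\<Sum>e\<in>Basis. g e *\<^sub>R e) \<bullet> x = (\<Sum>e\<in>Basis. (x \<bullet> e) * g e)"
    unfolding inner_sum_left by (simp add: inner_commute mult.commute)
  also have "\<dots> = g (\<Sum>e\<in>Basis. (x \<bullet> e) *\<^sub>R e)"
    using assms by (simp add: linear_sum linear_scale o_def)
  also have "\<dots> = g x" by (simp add: euclidean_representation)
  finally show ?thesis .
qed

lemma dual_diff: "y \<in> dual_lattice L \<Longrightarrow> y' \<in> dual_lattice L \<Longrightarrow> y - y' \<in> dual_lattice L"
  unfolding dual_lattice_def by (auto simp: inner_diff_right intro: Ints_diff)

lemma orth_basis_zero:
  fixes B :: "'a::euclidean_space set"
  assumes B: "independent B" "span B = UNIV" "finite B" and o: "\<And>b. b \<in> B \<Longrightarrow> y \<bullet> b = 0"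
  shows "y = 0"
proof -
  have "y \<bullet> y = y \<bullet> (\<Sum>b\<in>B. representation B y b *\<^sub>R b)" using rep_facts(1)[OF B] by simp
  also have "\<dots> = (\<Sum>b\<in>B. representation B y b * (y \<bullet> b))" by (simp add: inner_sum_right)
  also have "\<dots> = 0" using o by simp
  finally show ?thesis by simp
qed

lemma dual_sep:
  fixes L B :: "'a::euclidean_space set"
  assumes B: "B \<subseteq> L" "independent B" "span B = UNIV" "finite B"
  obtains \<rho> where "\<rho> > 0" "\<And>y. y \<in> dual_lattice L \<Longrightarrow> y \<noteq> 0 \<Longrightarrow> \<rho> \<le> norm y"
proof -
  define Mb where "Mb = 1 + (\<Sum>b\<in>B. norm b)"
  have Mbp: "Mb > 0" unfolding Mb_def by (simp add: add_pos_nonneg sum_nonneg)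
  have Mb: "norm b \<le> Mb" if "b \<in> B" for b
  proof -
    have "norm b \<le> (\<Sum>b\<in>B. norm b)" by (rule member_le_sum) (use that B(4) in auto)
    then show ?thesis unfolding Mb_def by simp
  qed
  have "1 / Mb \<le> norm y" if y: "y \<in> dual_lattice L" "y \<noteq> 0" for y
  proof -
    obtain b where b: "b \<in> B" "y \<bullet> b \<noteq> 0" using orth_basis_zero[OF B(2-4)] y(2) by blast
    have "y \<bullet> b \<in> \<int>" using y(1) b(1) B(1) unfolding dual_lattice_def by (auto simp: inner_commute)
    then have "1 \<le> \<bar>y \<bullet> b\<bar>" using b(2) Ints_nonzero_abs_ge1 by blast
    also have "\<dots> \<le> norm y * norm b" by (rule Cauchy_Schwarz_ineq2)
    also have "\<dots> \<le> norm y * Mb" using Mb[OF b(1)] by (simp add: mult_left_mono)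
    finally show ?thesis using Mbp by (simp add: field_simps)
  qed
  then show ?thesis using that[of "1/Mb"] Mbp by auto
qed

lemma dual_bfinite:
  fixes L B :: "'a::euclidean_space set"
  assumes B: "B \<subseteq> L" "independent B" "span B = UNIV" "finite B"
  shows "finite {y. y \<in> dual_lattice L \<and> norm y \<le> R}"
proof -
  obtain \<rho> where r: "\<rho> > 0" "\<And>y. y \<in> dual_lattice L \<Longrightarrow> y \<noteq> 0 \<Longrightarrow> \<rho> \<le> norm y"
    using dual_sep[OF B] by blast
  show ?thesis
  proof (rule discrete_finite[OF r(1), of "dual_lattice L"])
    show "\<rho> \<le> norm (x - y)" if "x \<in> dual_lattice L" "y \<in> dual_lattice L" "x \<noteq> y" for x y
      using r(2)[OF dual_diff[OF that(1,2)]] that(3) by simp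
    show "bounded {y \<in> dual_lattice L. norm y \<le> R}"
      by (rule bounded_subset[OF bounded_cball[of 0 R]]) auto
  qed auto
qed

lemma flat_small:
  fixes L B :: "'a::euclidean_space set"
  assumes L: "is_lattice L" and B: "B \<subseteq> L" "independent B" "span B = UNIV" "finite B"
    and C: "bounded C" "C \<noteq> {}" "C \<subseteq> {x. a \<bullet> x = b0}" "a \<noteq> 0" and eps: "\<epsilon> > 0"
  obtains y where "y \<in> dual_lattice L" "y \<noteq> 0" "dir_width y C < \<epsilon>"
proof -
  obtain Nf :: nat where Nf: "Nf > 0" "\<And>x b. x \<in> L \<Longrightarrow> b \<in> B \<Longrightarrow> real Nf * representation B x b \<in> \<int>"
    using rational_coords[OF L B] by blast
  define c where "c b x = representation B x b" for b x
  note rf = rep_facts[OF B(2-4), folded c_def]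
  have lin: "c b (x + y) = c b x + c b y" "c b (r *\<^sub>R x) = r * c b x" "c b (x - y) = c b x - c b y"
    for b x y r
    using rf(3)[of b] by (auto simp: bounded_linear.linear linear_add linear_scale linear_diff)
  have "\<forall>b. \<exists>K>0. \<forall>x. norm (c b x) \<le> norm x * K"
    using rf(3) bounded_linear.pos_bounded by blast
  then obtain Kf where Kf: "\<And>b. Kf b > 0" "\<And>b x. \<bar>c b x\<bar> \<le> norm x * Kf b" by (metis real_norm_def)
  define K0 where "K0 = (\<Sum>b\<in>B. Kf b)"
  have K0nn: "K0 \<ge> 0" unfolding K0_def using Kf(1) by (simp add: sum_nonneg less_imp_le)
  have K0: "\<bar>c b x\<bar> \<le> norm x * K0" if "b \<in> B" for b x
  proof -
    have "Kf b \<le> K0" unfolding K0_def by (rule member_le_sum) (use that B(4) Kf(1) less_imp_le in auto)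
    then show ?thesis using Kf(2)[of b x] by (meson mult_left_mono norm_ge_zero order_trans)
  qed
  obtain M where M: "\<And>x. x \<in> C \<Longrightarrow> norm x \<le> M" using C(1) bounded_iff by blast
  have Mnn: "M \<ge> 0" using C(2) M norm_ge_zero order_trans by blast
  define d where "d = card B"
  obtain bb where bb: "bij_betw bb {0..<d} B" using ex_bij_betw_nat_finite[OF B(4)] d_def by blast
  have bbB: "bb i \<in> B" if "i < d" for i using bb that by (auto simp: bij_betw_def)
  have bbinj: "bb i = bb j \<longleftrightarrow> i = j" if "i < d" "j < d" for i j
    using bb that unfolding bij_betw_def inj_on_def by auto
  have reidx: "(\<Sum>b\<in>B. f b) = (\<Sum>i<d. f (bb i))" for f :: "'a \<Rightarrow> real"
    using sum.reindex_bij_betw[OF bb, of f] by (simp add: atLeast0LessThan)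
  obtain b1 where b1: "b1 \<in> B" "a \<bullet> b1 \<noteq> 0"
    using orth_basis_zero[OF B(2-4), of a] C(4) by blast
  obtain i1 where i1: "i1 < d" "bb i1 = b1" using bb b1(1) unfolding bij_betw_def by auto
  define \<theta> where "\<theta> i = (a \<bullet> bb i) / real Nf" for i
  have th1: "\<theta> i1 \<noteq> 0" using b1 i1 Nf(1) by (simp add: \<theta>_def)
  define Bd where "Bd = real Nf * real d * K0 * (2*M)"
  have Bdnn: "Bd \<ge> 0" unfolding Bd_def using K0nn Mnn by simp
  obtain Nn :: nat where Nn: "real Nn > max (1 / \<bar>\<theta> i1\<bar>) (Bd / \<epsilon>)" using reals_Archimedean2 by blast
  have Nnpos: "Nn > 0" using Nn th1 by (metis zero_less_abs_iff divide_pos_pos max.strict_boundedE of_nat_0_less_iff zero_less_one order_less_trans)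
  obtain q pp where qp: "0 < q" "\<And>i. i < d \<Longrightarrow> \<bar>of_int q * \<theta> i - of_int (pp i)\<bar> < 1 / Nn"
    using Dirichlet_approx_simult[where N=Nn and n=d and \<theta>=\<theta>, OF Nnpos] by metis
  define g where "g x = real Nf * (\<Sum>i<d. of_int (pp i) * c (bb i) x)" for x
  have glin: "linear g"
    by (rule linearI) (simp_all add: g_def lin algebra_simps sum.distrib sum_distrib_left)
  define y where "y = (\<Sum>e\<in>Basis. g e *\<^sub>R e)"
  have yx: "y \<bullet> x = g x" for x using riesz[OF glin] y_def by simp
  have ydual: "y \<in> dual_lattice L"
    unfolding dual_lattice_def
  proof (clarify)
    fix x assume x: "x \<in> L"
    have "x \<bullet> y = (\<Sum>i<d. of_int (pp i) * (real Nf * c (bb i) x))"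
      using yx[of x] by (simp add: inner_commute g_def sum_distrib_left algebra_simps)
    also have "\<dots> \<in> \<int>"
    proof (rule Ints_sum)
      fix i assume "i \<in> {..<d}"
      then have "real Nf * c (bb i) x \<in> \<int>" using Nf(2)[OF x bbB] by (simp add: c_def)
      then show "of_int (pp i) * (real Nf * c (bb i) x) \<in> \<int>" by (rule Ints_mult[OF Ints_of_int])
    qed
    finally show "x \<bullet> y \<in> \<int>" .
  qed
  have pp1: "pp i1 \<noteq> 0"
  proof
    assume "pp i1 = 0"
    then have "\<bar>of_int q * \<theta> i1\<bar> < 1 / Nn" using qp(2)[OF i1(1)] by simp
    moreover have "\<bar>\<theta> i1\<bar> \<le> \<bar>of_int q * \<theta> i1\<bar>" using qp(1)
      by (simp add: abs_mult mult_le_cancel_right1)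
    moreover have "1 / Nn < \<bar>\<theta> i1\<bar>" using Nn th1 Nnpos
      by (smt (verit, ccfv_SIG) divide_less_eq max.strict_boundedE mult.commute of_nat_0_less_iff zero_less_abs_iff)
    ultimately show False by linarith
  qed
  have "y \<bullet> b1 = real Nf * (\<Sum>i<d. of_int (pp i) * c (bb i) b1)" using yx g_def by simp
  also have "(\<Sum>i<d. of_int (pp i) * c (bb i) b1) = (\<Sum>i<d. if i = i1 then of_int (pp i) else 0)"
    by (rule sum.cong) (use rf(2) bbB b1(1) i1 bbinj in auto)
  also have "\<dots> = of_int (pp i1)" using i1(1) by simp
  finally have "y \<bullet> b1 \<noteq> 0" using pp1 Nf(1) by simp
  then have ynz: "y \<noteq> 0" by auto
  have wid: "dir_width y C \<le> Bd / Nn"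
  proof (rule dw_least[OF C(2)])
    fix p p' assume pp': "p \<in> C" "p' \<in> C"
    define x where "x = p - p'"
    have nx: "norm x \<le> 2*M" unfolding x_def using M[OF pp'(1)] M[OF pp'(2)] norm_triangle_ineq4[of p p'] by linarith
    have ax0: "a \<bullet> x = 0" using C(3) pp' by (auto simp: x_def inner_diff_right)
    have "a \<bullet> x = a \<bullet> (\<Sum>b\<in>B. c b x *\<^sub>R b)" using rf(1) by simp
    also have "\<dots> = (\<Sum>b\<in>B. c b x * (a \<bullet> b))" by (simp add: inner_sum_right)
    also have "\<dots> = (\<Sum>i<d. c (bb i) x * (a \<bullet> bb i))" by (rule reidx)
    also have "\<dots> = real Nf * (\<Sum>i<d. c (bb i) x * \<theta> i)"
      using Nf(1) by (simp add: \<theta>_def sum_distrib_left)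
    finally have ax: "a \<bullet> x = real Nf * (\<Sum>i<d. c (bb i) x * \<theta> i)" .
    have "y \<bullet> x = g x - of_int q * (a \<bullet> x)" using yx ax0 by simp
    also have "\<dots> = real Nf * (\<Sum>i<d. c (bb i) x * (of_int (pp i) - of_int q * \<theta> i))"
      unfolding g_def ax by (simp add: algebra_simps sum_subtractf sum_distrib_left)
    also have "\<dots> \<le> real Nf * (\<Sum>i<d. norm x * K0 * (1 / Nn))"
    proof (rule mult_left_mono[OF sum_mono])
      fix i assume "i \<in> {..<d}"
      then have i: "i < d" by simp
      have "c (bb i) x * (of_int (pp i) - of_int q * \<theta> i) \<le> \<bar>c (bb i) x\<bar> * \<bar>of_int (pp i) - of_int q * \<theta> i\<bar>"
        by (metis abs_ge_self abs_mult)
      also have "\<dots> \<le> (norm x * K0) * (1 / Nn)"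
        using K0[OF bbB[OF i], of x] qp(2)[OF i]
        by (intro mult_mono) (auto simp: abs_minus_commute)
      finally show "c (bb i) x * (of_int (pp i) - of_int q * \<theta> i) \<le> norm x * K0 * (1 / Nn)" .
    qed simp
    also have "\<dots> = real Nf * real d * norm x * K0 / Nn" by simp
    also have "\<dots> \<le> Bd / Nn"
    proof (rule divide_right_mono)
      have h1: "norm x * K0 \<le> 2*M*K0" using mult_right_mono[OF nx K0nn] .
      have h2: "real Nf * real d * (norm x * K0) \<le> real Nf * real d * (2*M*K0)"
        by (rule mult_left_mono[OF h1]) simp
      then show "real Nf * real d * norm x * K0 \<le> Bd" by (simp add: Bd_def algebra_simps)
    qed simp
    finally show "y \<bullet> (p - p') \<le> Bd / Nn" unfolding x_def .
  qed
  have "Bd / Nn < \<epsilon>" using Nn Nnpos eps Bdnn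
    by (smt (verit, best) divide_less_eq max.strict_boundedE mult.commute of_nat_0_less_iff)
  then show ?thesis using that[OF ydual ynz] wid by linarith
qed


definition hs :: "'a::euclidean_space \<Rightarrow> (nat \<Rightarrow> 'a) \<Rightarrow> nat \<Rightarrow> real" where
  "hs u s n = Max ((\<lambda>i. u \<bullet> s i) ` {..<n})"

lemma hs_ge: "i < n \<Longrightarrow> u \<bullet> s i \<le> hs u s n"
  unfolding hs_def by (rule Max_ge) auto

lemma hs_attain: "n > 0 \<Longrightarrow> \<exists>i<n. hs u s n = u \<bullet> s i"
proof -
  assume "n > 0"
  then have "hs u s n \<in> (\<lambda>i. u \<bullet> s i) ` {..<n}" unfolding hs_def by (intro Max_in) auto
  then show ?thesis by auto
qed

lemma hs_hull:
  assumes "x \<in> convex hull (s ` {..<n})"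
  shows "u \<bullet> x \<le> hs u s n"
  by (rule hull_halfspace[OF _ assms]) (auto intro: hs_ge)

lemma hs_mono:
  assumes "n > 0" "\<And>i. i < n \<Longrightarrow> s' i \<in> convex hull (s ` {..<n})"
  shows "hs u s' n \<le> hs u s n"
  using hs_attain[OF assms(1), of u s'] hs_hull assms(2) by metis

lemma hs_lip:
  assumes "n > 0"
  shows "hs u l n \<le> hs u s n + norm u * (\<Sum>i<n. norm (s i - l i))"
proof -
  obtain i where i: "i < n" "hs u l n = u \<bullet> l i" using hs_attain[OF assms] by blast
  have "u \<bullet> l i = u \<bullet> s i + u \<bullet> (l i - s i)" by (simp add: inner_diff_right)
  also have "\<dots> \<le> hs u s n + norm u * norm (s i - l i)"
    using hs_ge[OF i(1), of u s] Cauchy_Schwarz_ineq2[of u "l i - s i"]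
    by (simp add: norm_minus_commute)
  also have "norm (s i - l i) \<le> (\<Sum>i<n. norm (s i - l i))"
    by (rule member_le_sum) (use i in auto)
  then have "hs u s n + norm u * norm (s i - l i) \<le> hs u s n + norm u * (\<Sum>i<n. norm (s i - l i))"
    by (simp add: mult_left_mono)
  finally show ?thesis using i by simp
qed

lemma hs_bound:
  assumes "n > 0" "\<And>i. i < n \<Longrightarrow> norm (s i) \<le> R"
  shows "\<bar>hs u s n\<bar> \<le> norm u * R"
proof -
  obtain i where i: "i < n" "hs u s n = u \<bullet> s i" using hs_attain[OF assms(1)] by blast
  have "\<bar>u \<bullet> s i\<bar> \<le> norm u * norm (s i)" by (rule Cauchy_Schwarz_ineq2)
  also have "\<dots> \<le> norm u * R" using assms(2)[OF i(1)] by (simp add: mult_left_mono)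
  finally show ?thesis using i by simp
qed

lemma hs_lip_u:
  assumes "n > 0" "\<And>i. i < n \<Longrightarrow> norm (s i) \<le> R"
  shows "hs u s n \<le> hs u' s n + norm (u - u') * R"
proof -
  obtain i where i: "i < n" "hs u s n = u \<bullet> s i" using hs_attain[OF assms(1)] by blast
  have "u \<bullet> s i = u' \<bullet> s i + (u - u') \<bullet> s i" by (simp add: inner_diff_left)
  also have "\<dots> \<le> hs u' s n + norm (u - u') * R"
  proof (rule add_mono[OF hs_ge[OF i(1)]])
    have "(u - u') \<bullet> s i \<le> norm (u - u') * norm (s i)" by (rule norm_cauchy_schwarz)
    also have "\<dots> \<le> norm (u - u') * R" using assms(2)[OF i(1)] by (simp add: mult_left_mono)
    finally show "(u - u') \<bullet> s i \<le> norm (u - u') * R" .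
  qed
  finally show ?thesis using i by simp
qed

lemma geo_summable: "summable (\<lambda>k. (1/2::real)^k * R)"
  by (rule summable_mult2) simp

lemma geo_sum: "(\<Sum>k. (1/2::real)^k * R) = 2 * R"
proof -
  have "(\<Sum>k. (1/2::real)^k * R) = (\<Sum>k. (1/2::real)^k) * R"
    by (rule suminf_mult2[symmetric]) simp
  also have "\<dots> = 2 * R" by (simp add: suminf_geometric)
  finally show ?thesis .
qed

lemma bnd_summable:
  fixes a :: "nat \<Rightarrow> real"
  assumes "\<And>k. \<bar>a k\<bar> \<le> (1/2)^k * R"
  shows "summable a"
  by (rule summable_comparison_test[OF _ geo_summable[of R]]) (use assms in auto)

lemma ser_le:
  fixes a b :: "nat \<Rightarrow> real"
  assumes "\<And>k. \<bar>a k\<bar> \<le> (1/2)^k * R" "\<And>k. \<bar>b k\<bar> \<le> (1/2)^k * R"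
    "\<And>k. a k - b k \<le> (1/2)^k * \<Delta>"
  shows "suminf a \<le> suminf b + 2 * \<Delta>"
proof -
  have sa: "summable a" and sb: "summable b" using assms(1,2) by (auto intro: bnd_summable)
  have "suminf a - suminf b = (\<Sum>k. a k - b k)" by (rule suminf_diff[OF sa sb])
  also have "\<dots> \<le> (\<Sum>k. (1/2::real)^k * \<Delta>)"
    by (rule suminf_le) (use assms(3) summable_diff[OF sa sb] geo_summable in auto)
  also have "\<dots> = 2 * \<Delta>" by (rule geo_sum)
  finally show ?thesis by simp
qed

lemma ser_less:
  fixes a b :: "nat \<Rightarrow> real"
  assumes "\<And>k. \<bar>a k\<bar> \<le> (1/2)^k * R" "\<And>k. \<bar>b k\<bar> \<le> (1/2)^k * R"
    "\<And>k. a k \<le> b k" "a kz < b kz"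
  shows "suminf a < suminf b"
proof -
  have sa: "summable a" and sb: "summable b" using assms(1,2) by (auto intro: bnd_summable)
  have sd: "summable (\<lambda>k. b k - a k)" by (rule summable_diff[OF sb sa])
  have "0 < (\<Sum>k. b k - a k)"
    using suminf_pos_iff[OF sd] assms(3,4) by fastforce
  also have "\<dots> = suminf b - suminf a" by (rule suminf_diff[OF sb sa, symmetric])
  finally show ?thesis by simp
qed

lemma seq_extract:
  fixes s :: "nat \<Rightarrow> nat \<Rightarrow> 'a::euclidean_space"
  assumes P: "compact P" and s: "\<And>k i. i < n \<Longrightarrow> s k i \<in> P"
  shows "\<exists>l r. strict_mono r \<and> (\<forall>i<n. l i \<in> P \<and> (\<lambda>k. s (r k) i) \<longlonglongrightarrow> l i)"
  using s
proof (induction n)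
  case 0
  show ?case by (rule exI[of _ "\<lambda>_. 0"], rule exI[of _ id]) (simp add: strict_mono_def)
next
  case (Suc n)
  have "\<exists>l r. strict_mono r \<and> (\<forall>i<n. l i \<in> P \<and> (\<lambda>k. s (r k) i) \<longlonglongrightarrow> l i)"
  proof (rule Suc.IH)
    fix k i assume "i < n"
    then show "s k i \<in> P" using Suc.prems by simp
  qed
  then obtain l r where lr: "strict_mono r" "\<forall>i<n. l i \<in> P \<and> (\<lambda>k. s (r k) i) \<longlonglongrightarrow> l i"
    by blast
  have "\<forall>k. s (r k) n \<in> P" using Suc.prems by simp
  then obtain l' r' where l': "l' \<in> P" "strict_mono r'" "((\<lambda>k. s (r k) n) \<circ> r') \<longlonglongrightarrow> l'"
    using seq_compactE[OF compact_imp_seq_compact[OF P]] by metis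
  define l2 where "l2 = l(n := l')"
  have "strict_mono (r \<circ> r')" by (rule strict_mono_o[OF lr(1) l'(2)])
  moreover have "\<forall>i<Suc n. l2 i \<in> P \<and> (\<lambda>k. s ((r \<circ> r') k) i) \<longlonglongrightarrow> l2 i"
  proof (intro allI impI)
    fix i assume i: "i < Suc n"
    show "l2 i \<in> P \<and> (\<lambda>k. s ((r \<circ> r') k) i) \<longlonglongrightarrow> l2 i"
    proof (cases "i = n")
      case True
      then show ?thesis using l' by (simp add: l2_def o_def)
    next
      case False
      then have "i < n" using i by simp
      then have "l i \<in> P" "(\<lambda>k. s (r k) i) \<longlonglongrightarrow> l i" using lr(2) by auto
      moreover have "((\<lambda>k. s (r k) i) \<circ> r') \<longlonglongrightarrow> l i"
        by (rule LIMSEQ_subseq_LIMSEQ[OF \<open>(\<lambda>k. s (r k) i) \<longlonglongrightarrow> l i\<close> l'(2)])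
      ultimately show ?thesis using False by (simp add: l2_def o_def)
    qed
  qed
  ultimately show ?case by blast
qed

lemma face_aux:
  fixes z p v :: "'a::euclidean_space"
  assumes "X0 \<noteq> {}" "p \<in> convex hull (insert v X0)" "p \<noteq> v" "z \<bullet> v \<le> z \<bullet> p"
  shows "\<exists>u\<in>X0. z \<bullet> p \<le> z \<bullet> u"
proof (rule ccontr)
  assume "\<not> ?thesis"
  then have lt: "\<And>u. u \<in> X0 \<Longrightarrow> z \<bullet> u < z \<bullet> p" by force
  obtain a b c where abc: "a \<ge> 0" "b \<ge> 0" "a + b = 1" "c \<in> convex hull X0" "p = a *\<^sub>R v + b *\<^sub>R c"
    using assms(2) convex_hull_insert[OF assms(1)] by auto
  have "convex hull X0 \<subseteq> {x. z \<bullet> x < z \<bullet> p}"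
    by (rule hull_minimal) (use lt convex_halfspace_lt in auto)
  then have zc: "z \<bullet> c < z \<bullet> p" using abc(4) by auto
  show False
  proof (cases "b = 0")
    case True
    then have "p = v" using abc by simp
    then show False using assms(3) by simp
  next
    case False
    then have "b > 0" using abc(2) by simp
    have "z \<bullet> p = a * (z \<bullet> v) + b * (z \<bullet> c)" using abc(5) by (simp add: inner_add_right)
    also have "\<dots> < a * (z \<bullet> p) + b * (z \<bullet> p)"
      using mult_left_mono[OF assms(4) abc(1)] mult_strict_left_mono[OF zc \<open>b > 0\<close>] by linarith
    also have "\<dots> = z \<bullet> p" using abc(3) by (metis distrib_right mult_1)
    finally show False by simp
  qed
qed

lemma extreme_sub:
  assumes "x extreme_point_of S" "x \<in> T" "T \<subseteq> S"
  shows "x extreme_point_of T"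
  using assms unfolding extreme_point_of_def by blast

lemma ball_width:
  fixes C :: "'a::euclidean_space set"
  assumes "ball z r \<subseteq> C" "bounded C" "r > 0"
  shows "r * norm y \<le> dir_width y C"
proof (cases "y = 0")
  case True
  have "z \<in> C" using assms(1,3) by auto
  then show ?thesis using dw_nonneg[of C y] assms(2) True by auto
next
  case False
  define h where "h = (r / 2 / norm y) *\<^sub>R y"
  have nh: "norm h = r / 2" using False assms(3) by (simp add: h_def)
  have "z + h \<in> C" "z - h \<in> C" using assms(1,3) nh by (auto simp: dist_norm subset_iff)
  then have "y \<bullet> ((z + h) - (z - h)) \<le> dir_width y C" using dw_upper[OF assms(2)] by blast
  moreover have "y \<bullet> ((z + h) - (z - h)) = r * norm y"
    using False by (simp add: h_def inner_add_right power2_norm_eq_inner[symmetric] power2_eq_square)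
  ultimately show ?thesis by simp
qed

lemma dw_lip:
  fixes s l :: "nat \<Rightarrow> 'a::euclidean_space"
  assumes "n > 0"
  shows "dir_width y (convex hull (s ` {..<n})) \<le> dir_width y (convex hull (l ` {..<n})) + 2 * norm y * (\<Sum>i<n. norm (s i - l i))"
proof -
  have ne: "s ` {..<n} \<noteq> {}" using assms by auto
  obtain p q where pq: "p \<in> s ` {..<n}" "q \<in> s ` {..<n}" "dir_width y (convex hull (s ` {..<n})) = y \<bullet> (p - q)"
    using dw_hull_attain[OF finite_imageI[OF finite_lessThan] ne, of y] by metis
  then obtain i j where ij: "i < n" "j < n" "p = s i" "q = s j" by auto
  define \<Delta> where "\<Delta> = (\<Sum>i<n. norm (s i - l i))"
  have di: "norm (s i - l i) \<le> \<Delta>" "norm (s j - l j) \<le> \<Delta>" unfolding \<Delta>_def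
    by (rule member_le_sum, use ij in auto)+
  have bd: "bounded (convex hull (l ` {..<n}))" by (simp add: compact_imp_bounded finite_imp_compact_convex_hull)
  have "y \<bullet> (p - q) = y \<bullet> (l i - l j) + y \<bullet> (s i - l i) - y \<bullet> (s j - l j)"
    using ij by (simp add: inner_diff_right)
  also have "\<dots> \<le> dir_width y (convex hull (l ` {..<n})) + norm y * \<Delta> + norm y * \<Delta>"
  proof -
    have "y \<bullet> (l i - l j) \<le> dir_width y (convex hull (l ` {..<n}))"
      by (rule dw_upper[OF bd]) (use ij in \<open>auto intro!: hull_inc\<close>)
    moreover have "y \<bullet> (s i - l i) \<le> norm y * \<Delta>"
      using norm_cauchy_schwarz[of y "s i - l i"] di(1) by (meson mult_left_mono norm_ge_zero order_trans)
    moreover have "- (y \<bullet> (s j - l j)) \<le> norm y * \<Delta>"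
    proof -
      have "- (y \<bullet> (s j - l j)) = (- y) \<bullet> (s j - l j)" by simp
      also have "\<dots> \<le> norm (- y) * norm (s j - l j)" by (rule norm_cauchy_schwarz)
      also have "\<dots> \<le> norm y * \<Delta>" using di(2) by (simp add: mult_left_mono)
      finally show ?thesis .
    qed
    ultimately show ?thesis by linarith
  qed
  finally show ?thesis using pq(3) unfolding \<Delta>_def by simp
qed


lemma gap:
  fixes L B Q :: "'a::euclidean_space set"
  assumes B: "B \<subseteq> L" "independent B" "span B = UNIV" "finite B"
    and Q: "bounded Q" "ball z r \<subseteq> Q" "r > 0"
  obtains \<delta> where "\<delta> > 0"
    "\<And>y. y \<in> dual_lattice L \<Longrightarrow> y \<noteq> 0 \<Longrightarrow> dir_width y Q \<le> w + \<delta> \<Longrightarrow> dir_width y Q \<le> w"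
proof -
  define S where "S = {y. y \<in> dual_lattice L \<and> norm y \<le> (w + 1) / r}"
  have finS: "finite S" unfolding S_def by (rule dual_bfinite[OF B])
  define G where "G = (\<lambda>y. dir_width y Q - w) ` {y \<in> S. w < dir_width y Q}"
  have finG: "finite G" using finS unfolding G_def by auto
  have Gpos: "\<And>g. g \<in> G \<Longrightarrow> g > 0" unfolding G_def by auto
  define \<delta> where "\<delta> = (if G = {} then 1 else min 1 (Min G / 2))"
  have dpos: "\<delta> > 0"
  proof (cases "G = {}")
    case False
    then have "Min G \<in> G" using finG by (intro Min_in) auto
    then show ?thesis using Gpos False by (simp add: \<delta>_def)
  qed (simp add: \<delta>_def)
  have d1: "\<delta> \<le> 1" by (simp add: \<delta>_def)
  show ?thesis
  proof (rule that[OF dpos])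
    fix y assume y: "y \<in> dual_lattice L" "y \<noteq> 0" "dir_width y Q \<le> w + \<delta>"
    show "dir_width y Q \<le> w"
    proof (rule ccontr)
      assume "\<not> dir_width y Q \<le> w"
      then have gt: "w < dir_width y Q" by simp
      have "r * norm y \<le> dir_width y Q" by (rule ball_width[OF Q(2,1,3)])
      then have "norm y * r \<le> w + 1" using y(3) d1 by (simp add: mult.commute)
      then have "norm y \<le> (w + 1) / r" using Q(3) by (simp add: pos_le_divide_eq)
      then have "y \<in> S" using y(1) by (simp add: S_def)
      then have gG: "dir_width y Q - w \<in> G" unfolding G_def using gt by auto
      then have Gne: "G \<noteq> {}" by auto
      then have "\<delta> \<le> Min G / 2" by (simp add: \<delta>_def)
      moreover have "Min G \<le> dir_width y Q - w" using finG gG by simp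
      moreover have "Min G \<in> G" using finG Gne by (intro Min_in) auto
      then have "Min G > 0" using Gpos by blast
      ultimately show False using y(3) by linarith
    qed
  qed
qed

lemma move:
  fixes X C' :: "'a::euclidean_space set"
  assumes X: "finite X" and C': "convex_body C'" "C' \<subset> convex hull X"
    and w: "w > 0" and dl: "\<delta> > 0"
    and wC: "\<And>y. y \<in> dual_lattice L \<Longrightarrow> y \<noteq> 0 \<Longrightarrow> w \<le> dir_width y C'"
    and gap: "\<And>y. y \<in> dual_lattice L \<Longrightarrow> y \<noteq> 0 \<Longrightarrow> dir_width y (convex hull X) \<le> w + \<delta> \<Longrightarrow> dir_width y (convex hull X) \<le> w"
  obtains v v' where "v \<in> X" "v' \<in> convex hull X" "v \<notin> convex hull (insert v' (X - {v}))"
    "\<And>y. y \<in> dual_lattice L \<Longrightarrow> y \<noteq> 0 \<Longrightarrow> w \<le> dir_width y (convex hull (insert v' (X - {v})))"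
proof -
  define Q where "Q = convex hull X"
  have Qc: "compact Q" "convex Q" using X by (auto simp: Q_def finite_imp_compact_convex_hull)
  have Cc: "compact C'" "convex C'" "interior C' \<noteq> {}" using C'(1) by (auto simp: convex_body_def)
  have C'ne: "C' \<noteq> {}" using Cc(3) interior_subset by blast
  have CQ: "C' \<subset> Q" using C'(2) Q_def by simp
  have "\<not> {x. x extreme_point_of Q} \<subseteq> C'"
  proof
    assume "{x. x extreme_point_of Q} \<subseteq> C'"
    then have "convex hull {x. x extreme_point_of Q} \<subseteq> C'" by (rule hull_minimal) (rule Cc(2))
    then have "Q \<subseteq> C'" using Krein_Milman_Minkowski[OF Qc] by simp
    then show False using CQ by auto
  qed
  then obtain v where v: "v extreme_point_of Q" "v \<notin> C'" by auto
  have vX: "v \<in> X" using v(1) extreme_point_of_convex_hull unfolding Q_def by blast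
  define X0 where "X0 = X - {v}"
  have XvX0: "X = insert v X0" using vX X0_def by auto
  have X0ne: "X0 \<noteq> {}"
  proof
    assume "X0 = {}"
    then have "Q = {v}" using XvX0 by (simp add: Q_def)
    then show False using CQ v(2) C'ne by auto
  qed
  obtain c where c: "c \<in> X0" using X0ne by blast
  have vQ: "v \<in> Q" and cQ: "c \<in> Q" using vX c by (auto simp: Q_def X0_def intro: hull_inc)
  have X0Q: "X0 \<subseteq> Q" by (auto simp: Q_def X0_def intro: hull_inc)
  define t where "t = \<delta> / (2 * (w + \<delta>))"
  have t: "0 < t" "t < 1" using w dl by (auto simp: t_def field_simps)
  have t2: "(1 - t) * (w + \<delta>) = w + \<delta>/2" using w dl by (simp add: t_def field_simps)
  define v' where "v' = (1 - t) *\<^sub>R v + t *\<^sub>R c"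
  have v'Q: "v' \<in> Q" unfolding v'_def by (rule convexD[OF Qc(2) vQ cQ]) (use t in auto)
  define Qt where "Qt = convex hull (insert v' X0)"
  have QtQ: "Qt \<subseteq> Q" unfolding Qt_def by (rule hull_minimal) (use v'Q Qc(2) X0Q in auto)
  have finX0: "finite X0" using X by (simp add: X0_def)
  have bQt: "bounded Qt" using finX0 by (simp add: Qt_def compact_imp_bounded finite_imp_compact_convex_hull)
  have bQ: "bounded Q" using Qc compact_imp_bounded by auto
  have vQt: "v \<notin> Qt"
  proof
    assume "v \<in> Qt"
    then have "v extreme_point_of Qt" using extreme_sub[OF v(1) _ QtQ] by blast
    then have "v \<in> insert v' X0" unfolding Qt_def by (rule extreme_point_of_convex_hull)
    then have "v = v'" using X0_def by auto
    moreover have "t *\<^sub>R (c - v) = v' - v" by (simp add: v'_def algebra_simps)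
    ultimately have "t *\<^sub>R (c - v) = 0" by simp
    then have "c - v = 0" using t by simp
    then have "c = v" by simp
    then show False using c X0_def by auto
  qed
  have widths: "w \<le> dir_width y Qt" if y: "y \<in> dual_lattice L" "y \<noteq> 0" for y
  proof (cases "dir_width y Q \<le> w + \<delta>")
    case True
    then have eqw: "dir_width y Q \<le> w" using gap[OF y] Q_def by simp
    obtain p q where pq: "p \<in> C'" "q \<in> C'" "dir_width y C' = y \<bullet> (p - q)"
      using dw_attain[OF Cc(1) C'ne] by metis
    have pqw: "w \<le> y \<bullet> (p - q)" using wC[OF y] pq(3) by simp
    have pQ: "p \<in> Q" "q \<in> Q" using pq CQ by auto
    have upper: "y \<bullet> x \<le> y \<bullet> p" if "x \<in> Q" for x
    proof -
      have "y \<bullet> (x - q) \<le> dir_width y Q" by (rule dw_upper[OF bQ that pQ(2)])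
      then show ?thesis using eqw pqw by (simp add: inner_diff_right)
    qed
    have lower: "y \<bullet> q \<le> y \<bullet> x" if "x \<in> Q" for x
    proof -
      have "y \<bullet> (p - x) \<le> dir_width y Q" by (rule dw_upper[OF bQ pQ(1) that])
      then show ?thesis using eqw pqw by (simp add: inner_diff_right)
    qed
    have pv: "p \<noteq> v" "q \<noteq> v" using pq(1,2) v(2) by auto
    have pX: "p \<in> convex hull (insert v X0)" "q \<in> convex hull (insert v X0)"
      using pQ XvX0 Q_def by auto
    obtain u where u: "u \<in> X0" "y \<bullet> p \<le> y \<bullet> u"
      using face_aux[OF X0ne pX(1) pv(1), of y] upper[OF vQ] by blast
    have "- (y \<bullet> v) \<le> - (y \<bullet> q)" using lower[OF vQ] by simp
    then obtain u' where u': "u' \<in> X0" "(-y) \<bullet> q \<le> (-y) \<bullet> u'"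
      using face_aux[OF X0ne pX(2) pv(2), of "-y"] by auto
    have "y \<bullet> (u - u') \<le> dir_width y Qt"
      by (rule dw_upper[OF bQt]) (use u u' in \<open>auto simp: Qt_def intro!: hull_inc\<close>)
    moreover have "y \<bullet> (p - q) \<le> y \<bullet> (u - u')" using u u' by (simp add: inner_diff_right)
    ultimately show ?thesis using pqw by linarith
  next
    case False
    obtain p q where pq: "p \<in> Q" "q \<in> Q" "dir_width y Q = y \<bullet> (p - q)"
      using dw_attain[OF Qc(1)] vQ by (metis empty_iff)
    define H where "H = (\<lambda>x. t *\<^sub>R c + (1 - t) *\<^sub>R x)"
    have HQ: "H ` Q \<subseteq> Qt"
    proof -
      have "H ` Q = convex hull (H ` insert v X0)"
        unfolding H_def Q_def XvX0 by (rule convex_hull_affinity[symmetric])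
      also have "\<dots> \<subseteq> Qt"
      proof (rule hull_minimal)
        show "convex Qt" by (simp add: Qt_def)
        show "H ` insert v X0 \<subseteq> Qt"
        proof
          fix x assume "x \<in> H ` insert v X0"
          then obtain x0 where x0: "x0 \<in> insert v X0" "x = H x0" by auto
          show "x \<in> Qt"
          proof (cases "x0 = v")
            case True
            then have "x = v'" using x0 by (simp add: H_def v'_def add.commute)
            then show ?thesis by (simp add: Qt_def hull_inc)
          next
            case False
            then have x0X: "x0 \<in> X0" using x0 by simp
            have inQt: "x0 \<in> Qt" "c \<in> Qt" using x0X c by (auto simp: Qt_def intro: hull_inc)
            have "t *\<^sub>R c + (1 - t) *\<^sub>R x0 \<in> Qt"
              by (rule convexD[OF _ inQt(2) inQt(1)]) (use t in \<open>auto simp: Qt_def\<close>)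
            then show ?thesis using x0(2) by (simp add: H_def)
          qed
        qed
      qed
      finally show ?thesis .
    qed
    have "y \<bullet> (H p - H q) \<le> dir_width y Qt" using HQ pq by (intro dw_upper[OF bQt]) auto
    moreover have "H p - H q = (1 - t) *\<^sub>R (p - q)" by (simp add: H_def algebra_simps)
    moreover have "(1 - t) * (w + \<delta>) \<le> (1 - t) * (y \<bullet> (p - q))"
      using False pq(3) t by (intro mult_left_mono) auto
    ultimately show ?thesis using t2 dl by simp
  qed
  show ?thesis
    using that[of v v'] vX v'Q vQt widths unfolding Q_def Qt_def X0_def by blast
qed


theorem proposition3p22:
  fixes P L :: "'a::euclidean_space set"
  assumes "full_polytope P" and "is_lattice L"
  shows "\<exists>Q. full_polytope Q \<and> Q \<subseteq> P \<and> lattice_reduced L Q \<and>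
             lattice_width L Q = lattice_width L P \<and>
             card (vertices Q) \<le> card (vertices P)"
proof -
  have Ppol: "polytope P" and Pint: "interior P \<noteq> {}" using assms(1) by (auto simp: full_polytope_def)
  have Pc: "compact P" "convex P" using Ppol polytope_imp_compact polytope_imp_convex by auto
  obtain B where B: "B \<subseteq> L" "independent B" "span B = UNIV" "finite B"
    using lattice_basis[OF assms(2)] by blast
  have DLne: "\<exists>y. y \<in> dual_lattice L \<and> y \<noteq> 0"
  proof -
    obtain a :: 'a where a: "a \<in> Basis" using nonempty_Basis by blast
    have "a \<noteq> 0" using a nonzero_Basis by blast
    obtain y where "y \<in> dual_lattice L" "y \<noteq> 0" "dir_width y {0} < 1"
      using flat_small[OF assms(2) B, of "{0}" a 0 1] \<open>a \<noteq> 0\<close> by auto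
    then show ?thesis by blast
  qed
  define V where "V = {v. v extreme_point_of P}"
  have finV: "finite V" unfolding V_def
    by (rule finite_polyhedron_extreme_points[OF polytope_imp_polyhedron[OF Ppol]])
  have PV: "P = convex hull V" unfolding V_def by (rule Krein_Milman_Minkowski[OF Pc])
  define n where "n = card V"
  have Pne: "P \<noteq> {}" using Pint interior_subset by blast
  have Vne: "V \<noteq> {}" using Pne PV by auto
  have npos: "n > 0" using finV Vne by (simp add: n_def card_gt_0_iff)
  define w where "w = lattice_width L P"
  obtain \<rho> where rho: "\<rho> > 0" "\<And>y. y \<in> dual_lattice L \<Longrightarrow> y \<noteq> 0 \<Longrightarrow> \<rho> \<le> norm y"
    using dual_sep[OF B] by blast
  obtain z r where zr: "r > 0" "ball z r \<subseteq> P" using Pint by (metis ex_in_conv mem_interior)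
  have bP: "bounded P" using Pc compact_imp_bounded by auto
  have wpos: "w > 0"
  proof -
    have "r * \<rho> \<le> w" unfolding w_def
    proof (rule lw_ge[OF DLne])
      fix y assume y: "y \<in> dual_lattice L" "y \<noteq> 0"
      have "r * \<rho> \<le> r * norm y" using rho(2)[OF y] zr(1) by simp
      also have "\<dots> \<le> dir_width y P" by (rule ball_width[OF zr(2) bP zr(1)])
      finally show "r * \<rho> \<le> dir_width y P" .
    qed
    moreover have "r * \<rho> > 0" using zr(1) rho(1) by simp
    ultimately show ?thesis by linarith
  qed
  obtain R where R: "\<And>x. x \<in> P \<Longrightarrow> norm x \<le> R" using bP bounded_iff by blast
  have Rnn: "R \<ge> 0" using Pne R norm_ge_zero order_trans by blast
  define Qs where "Qs s = convex hull (s ` {..<n})" for s :: "nat \<Rightarrow> 'a"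
  define T where "T = {s :: nat \<Rightarrow> 'a. \<forall>i<n. s i \<in> P}"
  define Fe where "Fe = {s \<in> T. \<forall>y. y \<in> dual_lattice L \<and> y \<noteq> 0 \<longrightarrow> w \<le> dir_width y (Qs s)}"
  have QsP: "Qs s \<subseteq> P" if "s \<in> T" for s
    unfolding Qs_def by (rule hull_minimal) (use that Pc(2) in \<open>auto simp: T_def\<close>)
  have Qsc: "compact (Qs s)" "convex (Qs s)" "Qs s \<noteq> {}" for s
    using npos by (auto simp: Qs_def finite_imp_compact_convex_hull)
  have Qsb: "bounded (Qs s)" for s using Qsc(1) compact_imp_bounded by blast
  obtain s0 where s0: "bij_betw s0 {0..<n} V" using ex_bij_betw_nat_finite[OF finV] n_def by blast
  have s0img: "s0 ` {..<n} = V" using s0 by (simp add: bij_betw_def atLeast0LessThan)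
  have s0Fe: "s0 \<in> Fe"
  proof -
    have "s0 \<in> T" using s0img PV by (auto simp: T_def intro: hull_inc)
    moreover have "w \<le> dir_width y (Qs s0)" if "y \<in> dual_lattice L" "y \<noteq> 0" for y
      using lw_le[OF that Pne bP] s0img PV by (simp add: Qs_def w_def)
    ultimately show ?thesis by (auto simp: Fe_def)
  qed
  obtain D :: "'a set" where D: "countable D" "\<And>X. open X \<Longrightarrow> X \<noteq> {} \<Longrightarrow> \<exists>d\<in>D. d \<in> X"
    using countable_dense_exists by blast
  have Dne: "D \<noteq> {}" using D(2)[of UNIV] by auto
  define u where "u k = from_nat_into D k" for k
  have uD: "range u = D" using Dne D(1) unfolding u_def by simp
  define \<phi> where "\<phi> k = (1/2::real)^k / (1 + norm (u k))" for k
  have phipos: "\<phi> k > 0" for k by (simp add: \<phi>_def add_pos_nonneg)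
  have phib: "\<phi> k * norm (u k) \<le> (1/2)^k" for k
  proof -
    have pos: "0 < 1 + norm (u k)" by (simp add: add_pos_nonneg)
    have "norm (u k) / (1 + norm (u k)) \<le> 1" using pos by (simp add: pos_divide_le_eq)
    then have "(1/2::real)^k * (norm (u k) / (1 + norm (u k))) \<le> (1/2)^k * 1"
      by (intro mult_left_mono) auto
    then show ?thesis by (simp add: \<phi>_def)
  qed
  define F where "F s = (\<Sum>k. \<phi> k * hs (u k) s n)" for s
  have Tb: "norm (s i) \<le> R" if "s \<in> T" "i < n" for s i using that R by (auto simp: T_def)
  have termb: "\<bar>\<phi> k * hs (u k) s n\<bar> \<le> (1/2)^k * R" if "s \<in> T" for s k
  proof -
    have "\<bar>hs (u k) s n\<bar> \<le> norm (u k) * R" by (rule hs_bound[OF npos Tb[OF that]])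
    then have "\<bar>\<phi> k * hs (u k) s n\<bar> \<le> \<phi> k * (norm (u k) * R)"
      using phipos[of k] by (simp add: abs_mult mult_left_mono)
    also have "\<dots> = (\<phi> k * norm (u k)) * R" by simp
    also have "\<dots> \<le> (1/2)^k * R" using phib[of k] Rnn by (rule mult_right_mono)
    finally show ?thesis .
  qed
  have Flip: "F l \<le> F s + 2 * (\<Sum>i<n. norm (s i - l i))" if "s \<in> T" "l \<in> T" for s l
    unfolding F_def
  proof (rule ser_le[where R=R])
    show "\<bar>\<phi> k * hs (u k) l n\<bar> \<le> (1/2)^k * R" for k using termb[OF that(2)] .
    show "\<bar>\<phi> k * hs (u k) s n\<bar> \<le> (1/2)^k * R" for k using termb[OF that(1)] .
    show "\<phi> k * hs (u k) l n - \<phi> k * hs (u k) s n \<le> (1/2)^k * (\<Sum>i<n. norm (s i - l i))" for k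
    proof -
      have "hs (u k) l n - hs (u k) s n \<le> norm (u k) * (\<Sum>i<n. norm (s i - l i))"
        using hs_lip[OF npos, of "u k" l s] by simp
      then have "\<phi> k * (hs (u k) l n - hs (u k) s n) \<le> \<phi> k * (norm (u k) * (\<Sum>i<n. norm (s i - l i)))"
        using phipos[of k] by (intro mult_left_mono) auto
      also have "\<dots> = (\<phi> k * norm (u k)) * (\<Sum>i<n. norm (s i - l i))" by simp
      also have "\<dots> \<le> (1/2)^k * (\<Sum>i<n. norm (s i - l i))"
        using phib[of k] by (intro mult_right_mono) (auto intro: sum_nonneg)
      finally show ?thesis by (simp add: right_diff_distrib)
    qed
  qed
  have Fstrict: "F s' < F s"
    if ss: "s \<in> T" "s' \<in> T" "\<And>i. i < n \<Longrightarrow> s' i \<in> Qs s" "v \<in> Qs s" "v \<notin> Qs s'" for s s' v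
  proof -
    obtain a b where ab: "a \<bullet> v < b" "\<And>x. x \<in> Qs s' \<Longrightarrow> b < a \<bullet> x"
      using separating_hyperplane_closed_point[OF Qsc(2) compact_imp_closed[OF Qsc(1)] ss(5)] by blast
    define a' where "a' = - a"
    obtain i where i: "i < n" "hs a' s' n = a' \<bullet> s' i" using hs_attain[OF npos] by blast
    have "s' i \<in> Qs s'" using i(1) by (auto simp: Qs_def intro: hull_inc)
    then have "b < a \<bullet> s' i" by (rule ab(2))
    then have g0: "hs a' s' n < a' \<bullet> v" using ab(1) i(2) by (simp add: a'_def)
    define g where "g = a' \<bullet> v - hs a' s' n"
    have gpos: "g > 0" using g0 by (simp add: g_def)
    define rr where "rr = g / (norm v + R + 1)"
    have rrpos: "rr > 0" using gpos Rnn by (simp add: rr_def add_nonneg_pos)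
    obtain d where d: "d \<in> D" "d \<in> ball a' rr" using D(2)[of "ball a' rr"] rrpos by auto
    then obtain k where k: "u k = d" using uD by auto
    have dist: "norm (u k - a') < rr" using d(2) k by (simp add: dist_norm norm_minus_commute)
    have h1: "hs (u k) s' n \<le> hs a' s' n + norm (u k - a') * R"
      by (rule hs_lip_u[OF npos Tb[OF ss(2)]])
    have h2: "a' \<bullet> v - norm (u k - a') * norm v \<le> u k \<bullet> v"
    proof -
      have "(a' - u k) \<bullet> v \<le> norm (a' - u k) * norm v" by (rule norm_cauchy_schwarz)
      then show ?thesis by (simp add: inner_diff_left norm_minus_commute)
    qed
    have "norm (u k - a') * (norm v + R) \<le> rr * (norm v + R)"
      using dist Rnn by (intro mult_right_mono) auto
    also have "\<dots> < g"
    proof -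
      have "rr * (norm v + R) = g * ((norm v + R) / (norm v + R + 1))" by (simp add: rr_def)
      also have "\<dots> < g * 1"
      proof (rule mult_strict_left_mono[OF _ gpos])
        have "0 < norm v + R + 1" using Rnn by (simp add: add_nonneg_pos)
        then show "(norm v + R) / (norm v + R + 1) < 1" by (simp add: pos_divide_less_eq)
      qed
      finally show ?thesis by simp
    qed
    finally have "norm (u k - a') * norm v + norm (u k - a') * R < g" by (simp add: algebra_simps)
    then have strict: "hs (u k) s' n < u k \<bullet> v" using h1 h2 by (simp add: g_def)
    have "u k \<bullet> v \<le> hs (u k) s n" using ss(4) hs_hull by (simp add: Qs_def)
    with strict have sk: "hs (u k) s' n < hs (u k) s n" by simp
    show ?thesis unfolding F_def
    proof (rule ser_less[where R=R and kz=k])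
      show "\<bar>\<phi> j * hs (u j) s' n\<bar> \<le> (1/2)^j * R" for j using termb[OF ss(2)] .
      show "\<bar>\<phi> j * hs (u j) s n\<bar> \<le> (1/2)^j * R" for j using termb[OF ss(1)] .
      show "\<phi> j * hs (u j) s' n \<le> \<phi> j * hs (u j) s n" for j
        using hs_mono[OF npos, of s' s "u j"] ss(3) phipos[of j] by (simp add: Qs_def)
      show "\<phi> k * hs (u k) s' n < \<phi> k * hs (u k) s n"
        using sk phipos[of k] by simp
    qed
  qed
  have Fbelow: "- (2 * R) \<le> F s" if "s \<in> T" for s
  proof -
    have "(\<Sum>k. (1/2::real)^k * (- R)) \<le> F s" unfolding F_def
    proof (rule suminf_le)
      show "(1/2)^k * (- R) \<le> \<phi> k * hs (u k) s n" for k using termb[OF that, of k] by (simp add: abs_le_iff)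
      show "summable (\<lambda>k. (1/2::real)^k * (- R))" by (rule geo_summable)
      show "summable (\<lambda>k. \<phi> k * hs (u k) s n)" by (rule bnd_summable[OF termb[OF that]])
    qed
    then show ?thesis using geo_sum[of "-R"] by simp
  qed
  define m where "m = Inf (F ` Fe)"
  have Fene: "Fe \<noteq> {}" using s0Fe by auto
  have bddF: "bdd_below (F ` Fe)" using Fbelow by (auto simp: Fe_def intro!: bdd_belowI[where m="- (2 * R)"])
  have mle: "m \<le> F s" if "s \<in> Fe" for s unfolding m_def using bddF that by (simp add: cInf_lower)
  have "\<exists>s\<in>Fe. F s < m + inverse (real (Suc k))" for k
  proof -
    have "Inf (F ` Fe) < m + inverse (real (Suc k))" by (simp add: m_def)
    then show ?thesis using cInf_lessD[of "F ` Fe"] Fene by auto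
  qed
  then obtain sq where sq: "\<And>k. sq k \<in> Fe" "\<And>k. F (sq k) < m + inverse (real (Suc k))" by metis
  have sqT: "sq k i \<in> P" if "i < n" for k i using sq(1)[of k] that by (auto simp: Fe_def T_def)
  obtain l r where lr: "strict_mono r" "\<forall>i<n. l i \<in> P \<and> (\<lambda>k. sq (r k) i) \<longlonglongrightarrow> l i"
    using seq_extract[OF Pc(1), of n sq] sqT by blast
  have lT: "l \<in> T" using lr(2) by (auto simp: T_def)
  define \<Delta> where "\<Delta> k = (\<Sum>i<n. norm (sq (r k) i - l i))" for k
  have Dlim: "\<Delta> \<longlonglongrightarrow> 0"
  proof -
    have "(\<lambda>k. \<Sum>i<n. norm (sq (r k) i - l i)) \<longlonglongrightarrow> (\<Sum>i<n. 0)"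
    proof (rule tendsto_sum)
      fix i assume "i \<in> {..<n}"
      then have "(\<lambda>k. sq (r k) i) \<longlonglongrightarrow> l i" using lr(2) by auto
      then have "(\<lambda>k. sq (r k) i - l i) \<longlonglongrightarrow> 0" by (rule LIM_zero)
      then show "(\<lambda>k. norm (sq (r k) i - l i)) \<longlonglongrightarrow> 0" by (rule tendsto_norm_zero)
    qed
    then show ?thesis by (simp add: \<Delta>_def[abs_def])
  qed
  have lFe: "l \<in> Fe"
  proof -
    have "w \<le> dir_width y (Qs l)" if y: "y \<in> dual_lattice L" "y \<noteq> 0" for y
    proof -
      have le: "w \<le> dir_width y (Qs l) + 2 * norm y * \<Delta> k" for k
      proof -
        have "w \<le> dir_width y (Qs (sq (r k)))" using sq(1)[of "r k"] y by (auto simp: Fe_def)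
        also have "\<dots> \<le> dir_width y (Qs l) + 2 * norm y * \<Delta> k"
          unfolding Qs_def \<Delta>_def by (rule dw_lip[OF npos])
        finally show ?thesis .
      qed
      have "(\<lambda>k. dir_width y (Qs l) + 2 * norm y * \<Delta> k) \<longlonglongrightarrow> dir_width y (Qs l) + 2 * norm y * 0"
        by (intro tendsto_intros Dlim)
      then have lim: "(\<lambda>k. dir_width y (Qs l) + 2 * norm y * \<Delta> k) \<longlonglongrightarrow> dir_width y (Qs l)" by simp
      show ?thesis
        by (rule tendsto_le[OF trivial_limit_sequentially lim tendsto_const]) (use le in auto)
    qed
    then show ?thesis using lT by (auto simp: Fe_def)
  qed
  have Fl: "F l \<le> m"
  proof -
    have le: "F l \<le> m + inverse (real (Suc k)) + 2 * \<Delta> k" for k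
    proof -
      have "F l \<le> F (sq (r k)) + 2 * \<Delta> k"
        unfolding \<Delta>_def by (rule Flip) (use sq(1) lT in \<open>auto simp: Fe_def\<close>)
      also have "F (sq (r k)) < m + inverse (real (Suc (r k)))" by (rule sq(2))
      also have "inverse (real (Suc (r k))) \<le> inverse (real (Suc k))"
        using seq_suble[OF lr(1), of k] by (simp add: le_imp_inverse_le)
      finally show ?thesis by simp
    qed
    have "(\<lambda>k. m + inverse (real (Suc k)) + 2 * \<Delta> k) \<longlonglongrightarrow> m + 0 + 2 * 0"
      by (intro tendsto_intros Dlim LIMSEQ_inverse_real_of_nat)
    then have lim: "(\<lambda>k. m + inverse (real (Suc k)) + 2 * \<Delta> k) \<longlonglongrightarrow> m" by simp
    show ?thesis
      by (rule tendsto_le[OF trivial_limit_sequentially lim tendsto_const]) (use le in auto)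
  qed
  have lmin: "F l \<le> F s" if "s \<in> Fe" for s using Fl mle[OF that] by linarith
  define Q0 where "Q0 = Qs l"
  have Q0P: "Q0 \<subseteq> P" using QsP[OF lT] by (simp add: Q0_def)
  have Q0int: "interior Q0 \<noteq> {}"
  proof
    assume "interior Q0 = {}"
    then obtain a b0 where ab: "a \<noteq> 0" "Q0 \<subseteq> {x. a \<bullet> x = b0}"
      using empty_interior_subset_hyperplane[OF Qsc(2)[of l]] unfolding Q0_def by metis
    obtain y where y: "y \<in> dual_lattice L" "y \<noteq> 0" "dir_width y Q0 < w"
      using flat_small[OF assms(2) B Qsb[of l] Qsc(3)[of l], of a b0 w] ab wpos
      unfolding Q0_def by metis
    then show False using lFe by (auto simp: Fe_def Q0_def)
  qed
  have lwQ0: "lattice_width L Q0 = w"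
  proof (rule antisym)
    show "lattice_width L Q0 \<le> w" unfolding w_def
    proof (rule lw_ge[OF DLne])
      fix y assume y: "y \<in> dual_lattice L" "y \<noteq> 0"
      have "lattice_width L Q0 \<le> dir_width y Q0"
        by (rule lw_le[OF y]) (use Qsc Qsb in \<open>auto simp: Q0_def\<close>)
      also have "\<dots> \<le> dir_width y P" by (rule dw_mono[OF Q0P _ bP]) (use Qsc in \<open>auto simp: Q0_def\<close>)
      finally show "lattice_width L Q0 \<le> dir_width y P" .
    qed
    show "w \<le> lattice_width L Q0" by (rule lw_ge[OF DLne]) (use lFe in \<open>auto simp: Fe_def Q0_def\<close>)
  qed
  have red: "lattice_reduced L Q0"
    unfolding lattice_reduced_def
  proof (intro conjI notI)
    show "convex_body Q0" using Qsc Q0int by (simp add: convex_body_def Q0_def)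
    assume "\<exists>C'. convex_body C' \<and> C' \<subset> Q0 \<and> lattice_width L C' = lattice_width L Q0"
    then obtain C' where C': "convex_body C'" "C' \<subset> Q0" "lattice_width L C' = w" using lwQ0 by auto
    have C'c: "compact C'" "C' \<noteq> {}" using C'(1) interior_subset by (auto simp: convex_body_def)
    have wC: "w \<le> dir_width y C'" if "y \<in> dual_lattice L" "y \<noteq> 0" for y
      using lw_le[OF that C'c(2) compact_imp_bounded[OF C'c(1)]] C'(3) by simp
    obtain z0 r0 where z0: "r0 > 0" "ball z0 r0 \<subseteq> Q0" using Q0int by (metis ex_in_conv mem_interior)
    obtain \<delta> where dl: "\<delta> > 0"
      "\<And>y. y \<in> dual_lattice L \<Longrightarrow> y \<noteq> 0 \<Longrightarrow> dir_width y Q0 \<le> w + \<delta> \<Longrightarrow> dir_width y Q0 \<le> w"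
      using gap[OF B Qsb[of l] z0(2)[unfolded Q0_def] z0(1), of w] unfolding Q0_def by metis
    define X where "X = l ` {..<n}"
    have Q0X: "Q0 = convex hull X" by (simp add: Q0_def Qs_def X_def)
    obtain v v' where vv: "v \<in> X" "v' \<in> convex hull X" "v \<notin> convex hull (insert v' (X - {v}))"
        "\<And>y. y \<in> dual_lattice L \<Longrightarrow> y \<noteq> 0 \<Longrightarrow> w \<le> dir_width y (convex hull (insert v' (X - {v})))"
      using move[of X C' w \<delta> L] C'(1,2) wpos dl wC Q0X by (auto simp: X_def)
    define l' where "l' i = (if l i = v then v' else l i)" for i
    have l'img: "l' ` {..<n} = insert v' (X - {v})"
    proof
      show "l' ` {..<n} \<subseteq> insert v' (X - {v})" by (auto simp: l'_def X_def)
      show "insert v' (X - {v}) \<subseteq> l' ` {..<n}"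
      proof
        fix x assume "x \<in> insert v' (X - {v})"
        then show "x \<in> l' ` {..<n}"
        proof
          assume "x = v'"
          obtain i where "i < n" "l i = v" using vv(1) by (auto simp: X_def)
          then show ?thesis using \<open>x = v'\<close> by (auto simp: l'_def image_iff intro!: bexI[of _ i])
        next
          assume "x \<in> X - {v}"
          then obtain i where "i < n" "l i = x" "x \<noteq> v" by (auto simp: X_def)
          then show ?thesis by (auto simp: l'_def image_iff intro!: bexI[of _ i])
        qed
      qed
    qed
    have l'T: "l' \<in> T" using lT vv(2) Q0X Q0P by (auto simp: T_def l'_def)
    have l'Fe: "l' \<in> Fe" using l'T vv(4) l'img by (auto simp: Fe_def Qs_def)
    have "F l' < F l"
    proof (rule Fstrict[OF lT l'T])
      show "l' i \<in> Qs l" if "i < n" for i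
        using vv(2) that Q0X by (auto simp: l'_def Q0_def Qs_def X_def intro: hull_inc)
      show "v \<in> Qs l" using vv(1) by (auto simp: Qs_def X_def intro: hull_inc)
      show "v \<notin> Qs l'" using vv(3) l'img by (simp add: Qs_def)
    qed
    then show False using lmin[OF l'Fe] by simp
  qed
  have vert: "card (vertices Q0) \<le> card (vertices P)"
  proof -
    have "vertices Q0 \<subseteq> l ` {..<n}" unfolding vertices_def Q0_def Qs_def
      using extreme_point_of_convex_hull by blast
    then have "card (vertices Q0) \<le> card (l ` {..<n})" by (intro card_mono) auto
    also have "\<dots> \<le> n" using card_image_le[of "{..<n}" l] by simp
    also have "n = card (vertices P)" by (simp add: n_def V_def vertices_def)
    finally show ?thesis .
  qed
  have fp: "full_polytope Q0" unfolding full_polytope_def polytope_def using Q0int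
    by (auto simp: Q0_def Qs_def)
  show ?thesis using fp Q0P red lwQ0 vert unfolding w_def by blast
qed

end
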